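(* Let $M$ be a semigroup and let $f:M^I\to\mathbb N$ be a map such that $f(I)=0$ and $f(m'mm'')\ge f(m)$ for all $m,m',m''\in M^I$. Define $D:\mathrm{Rh}(M^I)\times\mathrm{Rh}(M^I)\to\overline{\mathbb N}$ by $D(\sigma,\tau)=f(\sigma\wedge_{\mathcal L}\tau)$ if $\sigma\ne\tau$ and $D(\sigma,\sigma)=1+\sup f$ (interpreted as $\omega$ if $f$ is unbounded). Then (i) $D$ is a strict length function for $\mathrm{Rh}(M^I)$; (ii) $D=D_\chi$ for some strongly faithful elliptic $\mathrm{Rh}(M^I)$-tree $\chi$, unique up to isomorphism.
   Context: $M^I$ denotes $M$ with a new identity $I$ adjoined (even if $M$ is already a monoid). For a monoid $N$: $a\le_{\mathcal L}b$ iff $a\in Nb$; $a\,\mathcal L\,b$ iff $a\le_{\mathcal L}b$ and $b\le_{\mathcal L}a$; $a<_{\mathcal L}b$ iff $a\le_{\mathcal L}b$ and not $a\,\mathcal L\, b$. The Rhodes expansion $\mathrm{Rh}(N)$ is the set of finite chains $(n_k<_{\mathcal L}\cdots<_{\mathcal L}n_1<_{\mathcal L}n_0=1)$, $k\ge0$, with product $\sigma\tau=\mathrm{lm}(n_kn'_l\le_{\mathcal L}\cdots\le_{\mathcal L}n_1n'_l\le_{\mathcal L}n'_l<_{\mathcal L}\cdots<_{\mathcal L}n'_0=1)$ for $\sigma=(n_k<\cdots<n_0)$, $\tau=(n'_l<\cdots<n'_0)$, where $\mathrm{lm}$ keeps, in each block of $\mathcal L$-equivalent terms, only the leftmost one;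 it is a monoid with identity $(1)$. For $\sigma=(m_k<_{\mathcal L}\cdots<_{\mathcal L}m_0=I)$, $\tau=(m'_l<_{\mathcal L}\cdots<_{\mathcal L}m'_0=I)$ in $\mathrm{Rh}(M^I)$, $\sigma\wedge_{\mathcal L}\tau=m_r$ where $r$ is the largest $i\le\min\{k,l\}$ with $m_j=m'_j$ for $j<i$ and $m_i\,\mathcal L\,m'_i$. Length functions: $D:S\times S\to\mathbb N\cup\{\omega\}$ with (L1) $D(m,m')=D(m',m)$, (L2) $D(m',m'')\le D(m,m)$, (L3) $D(m',m'')\le D(m'm,m''m)$, (L4) $D(m,m'')\ge\min\{D(m,m'),D(m',m'')\}$; strict: (L5) $D(m',m'')=D(m,m)\Rightarrow m'=m''$. Elliptic $S$-tree $\chi=(r_0,T,\alpha,\theta)$: uniform rooted tree (all maximal rays have the same length), maximal ray $\alpha$, monoid homomorphism $\theta$ from $S$ to the depth-preserving distance-non-increasing self-maps of the vertex set, with $\mathrm{Vert}(T)=\bigcup_i\alpha_iS$; strongly faithful if $\alpha s=\alpha s'\Rightarrow s=s'$; $D_\chi(s,s')=|\alpha s\wedge\alpha s'|$ (length of the longest common initial segment of the rays). Isomorphism: bijective elliptic contraction preserving the distinguished ray and commuting with the actions. *)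

theory Defs
  imports Main "HOL-Library.Extended_Nat"
begin

section \<open>The monoid M^I (M a semigroup, I = None a new identity)\<close>

fun omult :: "'a::semigroup_mult option \<Rightarrow> 'a option \<Rightarrow> 'a option" where
  "omult None y = y"
| "omult (Some a) None = Some a"
| "omult (Some a) (Some b) = Some (a * b)"

definition le_L :: "'a::semigroup_mult option \<Rightarrow> 'a option \<Rightarrow> bool" where
  "le_L a b \<longleftrightarrow> (\<exists>c. a = omult c b)"

definition eq_L :: "'a::semigroup_mult option \<Rightarrow> 'a option \<Rightarrow> bool" where
  "eq_L a b \<longleftrightarrow> le_L a b \<and> le_L b a"

definition less_L :: "'a::semigroup_mult option \<Rightarrow> 'a option \<Rightarrow> bool" where
  "less_L a b \<longleftrightarrow> le_L a b \<and> \<not> eq_L a b"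

text \<open>A chain (n_k <_L ... <_L n_1 <_L n_0 = I) is represented by the list
  [n_0, n_1, ..., n_k], i.e. index i of the list holds n_i.\<close>

definition rh_set :: "'a::semigroup_mult option list set" where
  "rh_set = {xs. xs \<noteq> [] \<and> xs ! 0 = None \<and>
                 (\<forall>i. Suc i < length xs \<longrightarrow> less_L (xs ! Suc i) (xs ! i))}"

text \<open>lm: in each block of consecutive L-equivalent terms keep only the leftmost one
  in the written order n_k ... n_0, i.e. the one of largest index in our list.\<close>

fun lm :: "'a::semigroup_mult option list \<Rightarrow> 'a option list" where
  "lm [] = []"
| "lm [x] = [x]"
| "lm (x # y # ys) = (if eq_L x y then lm (y # ys) else x # lm (y # ys))"

text \<open>Product: sigma tau = lm(n_k n'_l <= ... <= n_1 n'_l <= n'_l < ... < n'_0).\<close>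

definition rh_mult :: "'a::semigroup_mult option list \<Rightarrow> 'a option list \<Rightarrow> 'a option list" where
  "rh_mult \<sigma> \<tau> = lm (\<tau> @ map (\<lambda>n. omult n (last \<tau>)) (tl \<sigma>))"

definition rh_one :: "'a::semigroup_mult option list" where
  "rh_one = [None]"

definition rh_meet :: "'a::semigroup_mult option list \<Rightarrow> 'a option list \<Rightarrow> 'a option" where
  "rh_meet \<sigma> \<tau> = \<sigma> ! (GREATEST i. i < length \<sigma> \<and> i < length \<tau> \<and>
                        (\<forall>j<i. \<sigma> ! j = \<tau> ! j) \<and> eq_L (\<sigma> ! i) (\<tau> ! i))"

definition length_function ::
  "'s set \<Rightarrow> ('s \<Rightarrow> 's \<Rightarrow> 's) \<Rightarrow> ('s \<Rightarrow> 's \<Rightarrow> enat) \<Rightarrow> bool" where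
  "length_function S mult D \<longleftrightarrow>
     (\<forall>m\<in>S. \<forall>m'\<in>S. D m m' = D m' m) \<and>
     (\<forall>m\<in>S. \<forall>m'\<in>S. \<forall>m''\<in>S. D m' m'' \<le> D m m) \<and>
     (\<forall>m\<in>S. \<forall>m'\<in>S. \<forall>m''\<in>S. D m' m'' \<le> D (mult m' m) (mult m'' m)) \<and>
     (\<forall>m\<in>S. \<forall>m'\<in>S. \<forall>m''\<in>S. D m m'' \<ge> min (D m m') (D m' m''))"

definition strict_length_function ::
  "'s set \<Rightarrow> ('s \<Rightarrow> 's \<Rightarrow> 's) \<Rightarrow> ('s \<Rightarrow> 's \<Rightarrow> enat) \<Rightarrow> bool" where
  "strict_length_function S mult D \<longleftrightarrow> length_function S mult D \<and>
     (\<forall>m\<in>S. \<forall>m'\<in>S. \<forall>m''\<in>S. D m' m'' = D m m \<longrightarrow> m' = m'')"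

text \<open>A rooted tree is given by a vertex set, a root and a parent function; the edges
  are {v, par v} for v \<noteq> root.\<close>

definition rooted_tree :: "'v set \<Rightarrow> 'v \<Rightarrow> ('v \<Rightarrow> 'v) \<Rightarrow> bool" where
  "rooted_tree V r par \<longleftrightarrow> r \<in> V \<and> (\<forall>v\<in>V. v \<noteq> r \<longrightarrow> par v \<in> V) \<and>
     (\<forall>v\<in>V. \<exists>k. (par ^^ k) v = r)"

definition depth :: "'v \<Rightarrow> ('v \<Rightarrow> 'v) \<Rightarrow> 'v \<Rightarrow> nat" where
  "depth r par v = (LEAST k. (par ^^ k) v = r)"

definition anc :: "'v \<Rightarrow> ('v \<Rightarrow> 'v) \<Rightarrow> 'v \<Rightarrow> 'v set" where
  "anc r par v = {(par ^^ i) v | i. i \<le> depth r par v}"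

text \<open>Graph distance in the tree: length of the unique path between u and v.\<close>
definition tree_dist :: "'v \<Rightarrow> ('v \<Rightarrow> 'v) \<Rightarrow> 'v \<Rightarrow> 'v \<Rightarrow> nat" where
  "tree_dist r par u v = card (anc r par u - anc r par v) + card (anc r par v - anc r par u)"

text \<open>A ray from the root of length l (number of edges, possibly infinite):
  vertices alpha 0 = root, alpha 1, ..., alpha i for i \<le> l.\<close>
definition is_ray :: "'v set \<Rightarrow> 'v \<Rightarrow> ('v \<Rightarrow> 'v) \<Rightarrow> enat \<Rightarrow> (nat \<Rightarrow> 'v) \<Rightarrow> bool" where
  "is_ray V r par l \<alpha> \<longleftrightarrow> \<alpha> 0 = r \<and> (\<forall>i. enat i \<le> l \<longrightarrow> \<alpha> i \<in> V) \<and>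
     (\<forall>i. enat (Suc i) \<le> l \<longrightarrow> \<alpha> (Suc i) \<noteq> r \<and> par (\<alpha> (Suc i)) = \<alpha> i)"

definition is_max_ray :: "'v set \<Rightarrow> 'v \<Rightarrow> ('v \<Rightarrow> 'v) \<Rightarrow> enat \<Rightarrow> (nat \<Rightarrow> 'v) \<Rightarrow> bool" where
  "is_max_ray V r par l \<alpha> \<longleftrightarrow> is_ray V r par l \<alpha> \<and>
     (\<forall>n. l = enat n \<longrightarrow> \<not> (\<exists>w\<in>V. w \<noteq> r \<and> par w = \<alpha> n))"

definition uniform_tree :: "'v set \<Rightarrow> 'v \<Rightarrow> ('v \<Rightarrow> 'v) \<Rightarrow> bool" where
  "uniform_tree V r par \<longleftrightarrow> rooted_tree V r par \<and>
     (\<forall>l \<alpha> l' \<alpha>'. is_max_ray V r par l \<alpha> \<and> is_max_ray V r par l' \<alpha>' \<longrightarrow> l = l')"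

text \<open>chi = (r_0, T, alpha, theta). The action of S is written on the right:
  act v s = v s, with v (s t) = (v s) t and v 1 = v.  hgt is the length of alpha.\<close>
record ('v, 's) etree =
  troot :: 'v
  tverts :: "'v set"
  tpar :: "'v \<Rightarrow> 'v"
  hgt :: enat
  tray :: "nat \<Rightarrow> 'v"
  tact :: "'v \<Rightarrow> 's \<Rightarrow> 'v"

definition elliptic_tree ::
  "'s set \<Rightarrow> ('s \<Rightarrow> 's \<Rightarrow> 's) \<Rightarrow> 's \<Rightarrow> ('v, 's) etree \<Rightarrow> bool" where
  "elliptic_tree S mult one \<chi> \<longleftrightarrow>
     (let V = tverts \<chi>; r = troot \<chi>; par = tpar \<chi>; act = tact \<chi> in
      uniform_tree V r par \<and>
      is_max_ray V r par (hgt \<chi>) (tray \<chi>) \<and>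
      (\<forall>v\<in>V. \<forall>s\<in>S. act v s \<in> V) \<and>
      (\<forall>v\<in>V. \<forall>s\<in>S. depth r par (act v s) = depth r par v) \<and>
      (\<forall>u\<in>V. \<forall>v\<in>V. \<forall>s\<in>S. tree_dist r par (act u s) (act v s) \<le> tree_dist r par u v) \<and>
      (\<forall>v\<in>V. \<forall>s\<in>S. \<forall>t\<in>S. act v (mult s t) = act (act v s) t) \<and>
      (\<forall>v\<in>V. act v one = v) \<and>
      V = {act (tray \<chi> i) s | i s. enat i \<le> hgt \<chi> \<and> s \<in> S})"

definition strongly_faithful :: "'s set \<Rightarrow> ('v, 's) etree \<Rightarrow> bool" where
  "strongly_faithful S \<chi> \<longleftrightarrow>
     (\<forall>s\<in>S. \<forall>s'\<in>S. (\<forall>i. enat i \<le> hgt \<chi> \<longrightarrow> tact \<chi> (tray \<chi> i) s = tact \<chi> (tray \<chi> i) s')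
                      \<longrightarrow> s = s')"

text \<open>D_chi(s,s') = length (number of edges) of the longest common initial segment of the
  rays alpha s and alpha s'.\<close>
definition D_chi :: "('v, 's) etree \<Rightarrow> 's \<Rightarrow> 's \<Rightarrow> enat" where
  "D_chi \<chi> s s' = Sup {enat i | i. enat i \<le> hgt \<chi> \<and>
       (\<forall>j\<le>i. tact \<chi> (tray \<chi> j) s = tact \<chi> (tray \<chi> j) s')}"

definition etree_iso :: "'s set \<Rightarrow> ('v, 's) etree \<Rightarrow> ('w, 's) etree \<Rightarrow> bool" where
  "etree_iso S \<chi> \<chi>' \<longleftrightarrow> (\<exists>\<phi>.
     bij_betw \<phi> (tverts \<chi>) (tverts \<chi>') \<and>
     \<phi> (troot \<chi>) = troot \<chi>' \<and>
     (\<forall>v\<in>tverts \<chi>. depth (troot \<chi>') (tpar \<chi>') (\<phi> v) = depth (troot \<chi>) (tpar \<chi>) v) \<and>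
     (\<forall>u\<in>tverts \<chi>. \<forall>v\<in>tverts \<chi>.
        tree_dist (troot \<chi>') (tpar \<chi>') (\<phi> u) (\<phi> v) \<le> tree_dist (troot \<chi>) (tpar \<chi>) u v) \<and>
     hgt \<chi> = hgt \<chi>' \<and>
     (\<forall>i. enat i \<le> hgt \<chi> \<longrightarrow> \<phi> (tray \<chi> i) = tray \<chi>' i) \<and>
     (\<forall>v\<in>tverts \<chi>. \<forall>s\<in>S. \<phi> (tact \<chi> v s) = tact \<chi>' (\<phi> v) s))"

definition D_rh :: "('a::semigroup_mult option \<Rightarrow> nat) \<Rightarrow> 'a option list \<Rightarrow> 'a option list \<Rightarrow> enat" where
  "D_rh f \<sigma> \<tau> = (if \<sigma> = \<tau> then eSuc (SUP m. enat (f m)) else enat (f (rh_meet \<sigma> \<tau>)))"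

end

theory Submission
  imports Defs
begin


lemma omult_assoc: "omult (omult a b) c = omult a (omult b c)"
  by (cases a; cases b; cases c) (auto simp: mult.assoc)

lemma omult_None_right[simp]: "omult a None = a" by (cases a) auto

lemma omult_eq_None: "omult a b = None \<longleftrightarrow> a = None \<and> b = None"
  by (cases a; cases b) auto

lemma omult_eq_None': "None = omult a b \<longleftrightarrow> a = None \<and> b = None"
  by (cases a; cases b) auto

lemma le_L_refl[simp]: "le_L a a" unfolding le_L_def by (rule exI[of _ None]) simp

lemma le_L_trans: "le_L a b \<Longrightarrow> le_L b c \<Longrightarrow> le_L a c"
  unfolding le_L_def by (metis omult_assoc)

lemma le_L_mult[simp]: "le_L (omult c b) b" unfolding le_L_def by blast

lemma le_L_right: "le_L a b \<Longrightarrow> le_L (omult a c) (omult b c)"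
  unfolding le_L_def by (metis omult_assoc)

lemma eq_L_refl[simp]: "eq_L a a" unfolding eq_L_def by simp
lemma eq_L_sym: "eq_L a b \<Longrightarrow> eq_L b a" unfolding eq_L_def by simp
lemma eq_L_trans: "eq_L a b \<Longrightarrow> eq_L b c \<Longrightarrow> eq_L a c" unfolding eq_L_def by (metis le_L_trans)
lemma eq_L_right: "eq_L a b \<Longrightarrow> eq_L (omult a c) (omult b c)" unfolding eq_L_def by (simp add: le_L_right)

lemma le_L_None: "le_L None x \<longleftrightarrow> x = None"
  unfolding le_L_def by (metis omult_eq_None omult.simps(1))

lemma less_L_not_None: "less_L y x \<Longrightarrow> y \<noteq> None"
  unfolding less_L_def eq_L_def using le_L_None by (metis le_L_refl)

lemma eq_L_None: "eq_L x None \<longleftrightarrow> x = None"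
  unfolding eq_L_def using le_L_None by auto

lemma lm_Cons: "lm (x # ys) = (if ys = [] then [x] else if eq_L x (hd ys) then lm ys else x # lm ys)"
  by (cases ys) auto

lemma lm_Nil_iff[simp]: "lm xs = [] \<longleftrightarrow> xs = []"
  by (induction xs rule: lm.induct) auto

lemma set_lm: "set (lm xs) \<subseteq> set xs"
  by (induction xs rule: lm.induct) auto

lemma hd_lm: "ys \<noteq> [] \<Longrightarrow> eq_L (hd (lm ys)) (hd ys)"
  by (induction ys rule: lm.induct) (auto intro: eq_L_trans eq_L_sym)

lemma last_lm: "xs \<noteq> [] \<Longrightarrow> last (lm xs) = last xs"
  by (induction xs rule: lm.induct) auto

lemma lm_idem[simp]: "lm (lm xs) = lm xs"
proof (induction xs rule: lm.induct)
  case (3 x y ys)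
  show ?case
  proof (cases "eq_L x y")
    case True thus ?thesis using 3 by simp
  next
    case False
    have ne: "lm (y # ys) \<noteq> []" by simp
    have "eq_L (hd (lm (y#ys))) y" using hd_lm[of "y#ys"] by simp
    hence "\<not> eq_L x (hd (lm (y#ys)))" using False eq_L_trans eq_L_sym by blast
    thus ?thesis using False 3 ne by (simp add: lm_Cons[of x "lm (y#ys)"])
  qed
qed auto

lemma lm_Cons_lm: "lm (x # lm ys) = lm (x # ys)"
proof (cases "ys = []")
  case False
  have "eq_L (hd (lm ys)) (hd ys)" using hd_lm False by blast
  hence "eq_L x (hd (lm ys)) \<longleftrightarrow> eq_L x (hd ys)" using eq_L_trans eq_L_sym by blast
  thus ?thesis using False by (simp add: lm_Cons)
qed simp

lemma lm_append_lm_right: "lm (xs @ lm ys) = lm (xs @ ys)"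
proof (induction xs)
  case (Cons x xs)
  have "lm (x # (xs @ lm ys)) = lm (x # lm (xs @ lm ys))" by (simp add: lm_Cons_lm)
  also have "\<dots> = lm (x # lm (xs @ ys))" using Cons by simp
  also have "\<dots> = lm (x # (xs @ ys))" by (simp add: lm_Cons_lm)
  finally show ?case by simp
qed simp

lemma lm_append_lm_left: "lm (lm xs @ ys) = lm (xs @ ys)"
proof (induction xs)
  case (Cons x xs)
  show ?case
  proof (cases "xs = []")
    case True thus ?thesis by simp
  next
    case ne: False
    show ?thesis
    proof (cases "eq_L x (hd xs)")
      case True
      thus ?thesis using ne Cons by (simp add: lm_Cons)
    next
      case False
      have "eq_L (hd (lm xs)) (hd xs)" using hd_lm ne by blast
      hence "\<not> eq_L x (hd (lm xs @ ys))" using False eq_L_trans eq_L_sym ne by simp blast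
      thus ?thesis using False ne Cons by (simp add: lm_Cons)
    qed
  qed
qed simp

lemma lm_map_lm: "lm (map (\<lambda>n. omult n c) (lm xs)) = lm (map (\<lambda>n. omult n c) xs)"
proof (induction xs)
  case (Cons x xs)
  let ?g = "\<lambda>n. omult n c"
  show ?case
  proof (cases "xs = []")
    case True thus ?thesis by simp
  next
    case ne: False
    show ?thesis
    proof (cases "eq_L x (hd xs)")
      case True
      hence "eq_L (?g x) (hd (map ?g xs))" using ne by (simp add: eq_L_right hd_map)
      thus ?thesis using True ne Cons by (simp add: lm_Cons)
    next
      case False
      have "lm (map ?g (lm (x # xs))) = lm (?g x # map ?g (lm xs))" using False ne by (simp add: lm_Cons)
      also have "\<dots> = lm (?g x # lm (map ?g (lm xs)))" by (simp add: lm_Cons_lm)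
      also have "\<dots> = lm (?g x # lm (map ?g xs))" using Cons by simp
      also have "\<dots> = lm (map ?g (x # xs))" by (simp add: lm_Cons_lm)
      finally show ?thesis .
    qed
  qed
qed simp

abbreviation wch where "wch xs \<equiv> successively (\<lambda>x y. le_L y x) xs"
abbreviation sch where "sch xs \<equiv> successively (\<lambda>x y. less_L y x) xs"

lemma lm_sch: "sch xs \<Longrightarrow> lm xs = xs"
  by (induction xs rule: lm.induct) (auto simp: less_L_def eq_L_def)

lemma lm_wch: "wch xs \<Longrightarrow> sch (lm xs)"
proof (induction xs rule: lm.induct)
  case (3 x y ys)
  show ?case
  proof (cases "eq_L x y")
    case True thus ?thesis using 3 by simp
  next
    case False
    have h: "eq_L (hd (lm (y#ys))) y" using hd_lm[of "y#ys"] by simp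
    have "le_L y x" using 3(3) by simp
    hence "less_L (hd (lm (y#ys))) x" using h False unfolding less_L_def eq_L_def
      by (meson le_L_trans)
    thus ?thesis using False 3 by (simp add: successively_Cons)
  qed
qed auto

lemma rh_set_iff: "xs \<in> rh_set \<longleftrightarrow> (\<exists>s. xs = None # s \<and> sch (None # s))"
  unfolding rh_set_def successively_conv_nth
  by (cases xs) auto

lemma sch_None_notin: "sch (x # s) \<Longrightarrow> None \<notin> set s"
proof (induction s arbitrary: x)
  case (Cons a s)
  thus ?case using less_L_not_None by (auto simp: successively_Cons) 
qed simp

lemma lm_None_Cons: "None \<notin> set xs \<Longrightarrow> lm (None # xs) = None # lm xs"
  by (cases xs) (auto simp: eq_L_def le_L_None)

lemma rh_mult_tl:
  assumes "None \<notin> set s" "None \<notin> set t"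
  shows "rh_mult (None # s) (None # t) = None # lm (t @ map (\<lambda>n. omult n (last (None # t))) s)"
proof -
  have "None \<notin> set (t @ map (\<lambda>n. omult n (last (None # t))) s)" using assms by (auto simp: omult_eq_None omult_eq_None')
  moreover have "rh_mult (None # s) (None # t) = lm (None # (t @ map (\<lambda>n. omult n (last (None # t))) s))"
    by (simp only: rh_mult_def list.sel append_Cons)
  ultimately show ?thesis using lm_None_Cons by metis
qed

lemma rh_assoc_gen:
  assumes "None \<notin> set s" "None \<notin> set t" "None \<notin> set p"
  shows "rh_mult (rh_mult (None # s) (None # t)) (None # p) = rh_mult (None # s) (rh_mult (None # t) (None # p))"
proof -
  define g where "g = (\<lambda>c n. omult (n::'a option) c)"
  define ct where "ct = last (None # t)"
  define cp where "cp = last (None # p)"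
  have nn: "None \<notin> set (lm (xs)) " if "None \<notin> set xs" for xs using set_lm that by blast
  have nm: "None \<notin> set (map (g c) xs)" if "None \<notin> set xs" for xs c using that by (auto simp: g_def omult_eq_None omult_eq_None')
  have st: "rh_mult (None # s) (None # t) = None # lm (t @ map (g ct) s)"
    using rh_mult_tl assms unfolding g_def ct_def by blast
  have tp: "rh_mult (None # t) (None # p) = None # lm (p @ map (g cp) t)"
    using rh_mult_tl assms unfolding g_def cp_def by blast
  have A: "rh_mult (rh_mult (None # s) (None # t)) (None # p)
      = None # lm (p @ map (g cp) (lm (t @ map (g ct) s)))"
  proof -
    have n1: "None \<notin> set (lm (t @ map (g ct) s))" using nn nm[of s ct] assms by (metis Un_iff set_append set_map)
    show ?thesis unfolding st g_def cp_def by (rule rh_mult_tl[OF n1[unfolded g_def] assms(3)])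
  qed
  have "lm (p @ map (g cp) (lm (t @ map (g ct) s))) = lm (p @ lm (map (g cp) (lm (t @ map (g ct) s))))"
    by (simp add: lm_append_lm_right)
  also have "\<dots> = lm (p @ lm (map (g cp) (t @ map (g ct) s)))"
    unfolding g_def by (simp add: lm_map_lm)
  also have "\<dots> = lm (p @ map (g cp) t @ map (g (omult ct cp)) s)"
    by (simp add: lm_append_lm_right g_def omult_assoc comp_def)
  finally have A2: "lm (p @ map (g cp) (lm (t @ map (g ct) s))) = lm (p @ map (g cp) t @ map (g (omult ct cp)) s)" .
  have lastc: "last (None # lm (p @ map (g cp) t)) = omult ct cp"
  proof (cases "t = []")
    case True thus ?thesis unfolding ct_def cp_def g_def
      by (cases "p = []") (auto simp: last_lm)
  next
    case False thus ?thesis unfolding ct_def cp_def g_def by (simp add: last_lm last_map)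
  qed
  have B: "rh_mult (None # s) (rh_mult (None # t) (None # p))
      = None # lm (lm (p @ map (g cp) t) @ map (g (omult ct cp)) s)"
  proof -
    have n1: "None \<notin> set (lm (p @ map (g cp) t))" using nn nm[of t cp] assms by (metis Un_iff set_append set_map)
    show ?thesis unfolding tp lastc[symmetric] g_def by (rule rh_mult_tl[OF assms(1) n1[unfolded g_def]])
  qed
  show ?thesis using A A2 B by (simp add: lm_append_lm_left)
qed




lemma rh_one_in[simp]: "rh_one \<in> rh_set" unfolding rh_one_def rh_set_def by simp

lemma rh_set_sch: "xs \<in> rh_set \<Longrightarrow> sch xs"
  unfolding rh_set_def successively_conv_nth by auto

lemma rh_set_decomp: "xs \<in> rh_set \<Longrightarrow> \<exists>s. xs = None # s \<and> None \<notin> set s"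
  using rh_set_iff sch_None_notin by metis

lemma rh_mult_closed:
  assumes "\<sigma> \<in> rh_set" "\<tau> \<in> rh_set"
  shows "rh_mult \<sigma> \<tau> \<in> rh_set"
proof -
  obtain s where s: "\<sigma> = None # s" "sch (None # s)" using assms rh_set_iff by blast
  obtain t where t: "\<tau> = None # t" "sch (None # t)" using assms rh_set_iff by blast
  define c where "c = last (None # t)"
  have ns: "None \<notin> set s" "None \<notin> set t" using s t sch_None_notin by blast+
  have eq: "rh_mult \<sigma> \<tau> = None # lm (t @ map (\<lambda>n. omult n c) s)"
    using rh_mult_tl[OF ns] s t c_def by simp
  have w1: "wch (None # t)" using t(2) by (rule successively_mono) (auto simp: less_L_def)
  have w2: "wch (map (\<lambda>n. omult n c) s)"
  proof -
    have "sch s" using s(2) by (cases s) simp_all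
    thus ?thesis unfolding successively_map by (rule successively_mono) (auto simp: less_L_def le_L_right)
  qed
  have w3: "s = [] \<or> le_L (hd (map (\<lambda>n. omult n c) s)) (last (None # t))"
    by (cases s) (auto simp: c_def)
  have "wch ((None # t) @ map (\<lambda>n. omult n c) s)"
    using w1 w2 w3 unfolding successively_append_iff by auto
  hence "sch (lm (None # (t @ map (\<lambda>n. omult n c) s)))" using lm_wch by simp
  moreover have "None \<notin> set (t @ map (\<lambda>n. omult n c) s)" using ns by (auto simp: omult_eq_None')
  ultimately have "sch (None # lm (t @ map (\<lambda>n. omult n c) s))" using lm_None_Cons by metis
  thus ?thesis unfolding eq rh_set_iff by blast
qed

lemma rh_assoc:
  assumes "\<sigma> \<in> rh_set" "\<tau> \<in> rh_set" "\<rho> \<in> rh_set"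
  shows "rh_mult (rh_mult \<sigma> \<tau>) \<rho> = rh_mult \<sigma> (rh_mult \<tau> \<rho>)"
  using rh_set_decomp[OF assms(1)] rh_set_decomp[OF assms(2)] rh_set_decomp[OF assms(3)] rh_assoc_gen
  by metis

lemma rh_left_one: "\<sigma> \<in> rh_set \<Longrightarrow> rh_mult rh_one \<sigma> = \<sigma>"
  unfolding rh_mult_def rh_one_def using lm_sch rh_set_sch by (metis append.right_neutral append_Cons append_Nil list.map(1) list.sel(3))

lemma rh_right_one: "\<sigma> \<in> rh_set \<Longrightarrow> rh_mult \<sigma> rh_one = \<sigma>"
proof -
  assume a: "\<sigma> \<in> rh_set"
  then obtain s where s: "\<sigma> = None # s" using rh_set_decomp by blast
  have "rh_mult \<sigma> rh_one = lm ([None] @ map (\<lambda>n. n) s)" unfolding rh_mult_def rh_one_def s by simp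
  thus ?thesis using a lm_sch rh_set_sch s by (metis append_Cons append_Nil map_ident)
qed

lemma chain_le: "\<sigma> \<in> rh_set \<Longrightarrow> i \<le> j \<Longrightarrow> j < length \<sigma> \<Longrightarrow> le_L (\<sigma> ! j) (\<sigma> ! i)"
proof (induction j)
  case (Suc j)
  show ?case
  proof (cases "i = Suc j")
    case False
    hence "le_L (\<sigma> ! j) (\<sigma> ! i)" using Suc by simp
    moreover have "less_L (\<sigma> ! Suc j) (\<sigma> ! j)" using Suc.prems unfolding rh_set_def by auto
    ultimately show ?thesis unfolding less_L_def using le_L_trans by blast
  qed simp
qed simp

fun lmp where
  "lmp [] z = []"
| "lmp (w # W) z = (if eq_L w (hd (W @ [z])) then lmp W z else w # lmp W z)"

lemma lm_split: "lm (W @ z # Z) = lmp W z @ lm (z # Z)"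
proof (induction W)
  case (Cons w W)
  have "hd (W @ z # Z) = hd (W @ [z])" by (cases W) auto
  thus ?case using Cons by (simp add: lm_Cons[of w])
qed simp

lemma lmp_cong: "eq_L z z' \<Longrightarrow> lmp W z = lmp W z'"
proof (induction W)
  case (Cons w W)
  have "eq_L w (hd (W @ [z])) \<longleftrightarrow> eq_L w (hd (W @ [z']))"
    using Cons.prems by (cases W) (auto intro: eq_L_trans eq_L_sym)
  thus ?case using Cons by simp
qed simp

definition Pm where "Pm \<sigma> \<tau> i \<longleftrightarrow> i < length \<sigma> \<and> i < length \<tau> \<and> (\<forall>j<i. \<sigma> ! j = \<tau> ! j) \<and> eq_L (\<sigma> ! i) (\<tau> ! i)"

definition mi where "mi \<sigma> \<tau> = (GREATEST i. Pm \<sigma> \<tau> i)"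

lemma rh_meet_mi: "rh_meet \<sigma> \<tau> = \<sigma> ! mi \<sigma> \<tau>"
  unfolding rh_meet_def mi_def Pm_def ..

lemma mi_prop: assumes "Pm \<sigma> \<tau> i" shows "Pm \<sigma> \<tau> (mi \<sigma> \<tau>)" "i \<le> mi \<sigma> \<tau>"
proof -
  have b: "\<And>y. Pm \<sigma> \<tau> y \<Longrightarrow> y \<le> length \<sigma>" unfolding Pm_def by simp
  show "Pm \<sigma> \<tau> (mi \<sigma> \<tau>)" unfolding mi_def by (rule GreatestI_nat[of "Pm \<sigma> \<tau>" i "length \<sigma>", OF assms b])
  show "i \<le> mi \<sigma> \<tau>" unfolding mi_def by (rule Greatest_le_nat[of "Pm \<sigma> \<tau>" i "length \<sigma>", OF assms b])
qed

lemma Pm0: "\<sigma> \<in> rh_set \<Longrightarrow> \<tau> \<in> rh_set \<Longrightarrow> Pm \<sigma> \<tau> 0"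
  unfolding Pm_def rh_set_def by auto

lemma Pm_sym: "Pm \<sigma> \<tau> i \<longleftrightarrow> Pm \<tau> \<sigma> i"
  unfolding Pm_def using eq_L_sym by metis

lemma mi_sym: "mi \<sigma> \<tau> = mi \<tau> \<sigma>"
proof -
  have "Pm \<sigma> \<tau> = Pm \<tau> \<sigma>" by (rule ext) (rule Pm_sym)
  thus ?thesis unfolding mi_def by simp
qed

lemma meet_prefix:
  assumes "A = w @ a # A'" "B = w @ b # B'" "eq_L a b"
  shows "rh_meet A B \<in> set (a # A')"
proof -
  have "Pm A B (length w)" unfolding Pm_def assms using assms(3) by (auto simp: nth_append)
  hence p: "Pm A B (mi A B)" "length w \<le> mi A B" using mi_prop by blast+
  hence "mi A B < length A" unfolding Pm_def by simp
  hence "A ! mi A B = (a # A') ! (mi A B - length w)" "mi A B - length w < length (a # A')"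
    using p(2) unfolding assms by (auto simp: nth_append)
  thus ?thesis unfolding rh_meet_mi by (metis nth_mem)
qed

lemma Pm_decomp:
  assumes "Pm A B r"
  shows "A = take r A @ A ! r # drop (Suc r) A" "B = take r A @ B ! r # drop (Suc r) B"
proof -
  have "take r A = take r B" using assms unfolding Pm_def by (intro nth_equalityI) auto
  thus "A = take r A @ A ! r # drop (Suc r) A" "B = take r A @ B ! r # drop (Suc r) B"
    using assms id_take_nth_drop unfolding Pm_def by metis+
qed

lemma enat_lt_eSuc: "enat x \<le> y \<Longrightarrow> enat x < eSuc y"
  by (cases y) (auto simp: eSuc_enat)

locale rhf =
  fixes f :: "'a::semigroup_mult option \<Rightarrow> nat"
  assumes f0: "f None = 0"
    and fm: "\<And>m m' m''. f (omult m' (omult m m'')) \<ge> f m"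
begin

abbreviation "D \<equiv> D_rh f"
abbreviation "H \<equiv> eSuc (SUP m. enat (f m))"

lemma f_le: "le_L x y \<Longrightarrow> f y \<le> f x"
  unfolding le_L_def using fm[of y _ None] by auto

lemma f_eqL: "eq_L x y \<Longrightarrow> f x = f y"
  unfolding eq_L_def using f_le le_antisym by blast

lemma f_le_H: "enat (f x) < H"
  by (rule enat_lt_eSuc) (use SUP_upper[of x UNIV "\<lambda>m. enat (f m)"] in simp)

lemma D_refl[simp]: "D \<sigma> \<sigma> = H" unfolding D_rh_def by simp

lemma D_neq: "\<sigma> \<noteq> \<tau> \<Longrightarrow> D \<sigma> \<tau> = enat (f (\<sigma> ! mi \<sigma> \<tau>))"
  unfolding D_rh_def rh_meet_mi by simp

lemma D_le_H: "D \<sigma> \<tau> \<le> H"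
  unfolding D_rh_def using f_le_H by (simp add: less_imp_le)

lemma D_lt_H: "\<sigma> \<noteq> \<tau> \<Longrightarrow> D \<sigma> \<tau> < H"
  unfolding D_rh_def using f_le_H by simp

lemma D_sym: "\<sigma> \<in> rh_set \<Longrightarrow> \<tau> \<in> rh_set \<Longrightarrow> D \<sigma> \<tau> = D \<tau> \<sigma>"
proof (cases "\<sigma> = \<tau>")
  case False
  assume a: "\<sigma> \<in> rh_set" "\<tau> \<in> rh_set"
  have "Pm \<sigma> \<tau> (mi \<sigma> \<tau>)" using mi_prop(1)[OF Pm0[OF a]] .
  hence "eq_L (\<sigma> ! mi \<sigma> \<tau>) (\<tau> ! mi \<tau> \<sigma>)" unfolding Pm_def mi_sym[of \<tau>] by simp
  thus ?thesis using False D_neq f_eqL by (metis)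
qed simp

lemma D_ultra:
  assumes a: "m \<in> rh_set" "m' \<in> rh_set" "m'' \<in> rh_set"
  shows "min (D m m') (D m' m'') \<le> D m m''"
proof (cases "m = m' \<or> m' = m'' \<or> m = m''")
  case True
  thus ?thesis using D_le_H by (auto simp: min_def)
next
  case False
  define r1 where "r1 = mi m m'"
  define r2 where "r2 = mi m' m''"
  have P1: "Pm m m' r1" unfolding r1_def using mi_prop(1)[OF Pm0] a by blast
  have P2: "Pm m' m'' r2" unfolding r2_def using mi_prop(1)[OF Pm0] a by blast
  define r where "r = min r1 r2"
  have Pr: "Pm m m'' r"
  proof -
    have "r < length m" "r < length m''" using P1 P2 unfolding Pm_def r_def by auto
    moreover have "\<forall>j<r. m ! j = m'' ! j" using P1 P2 unfolding Pm_def r_def by auto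
    moreover have "eq_L (m ! r) (m'' ! r)"
    proof (cases r1 r2 rule: linorder_cases)
      case less thus ?thesis using P1 P2 unfolding Pm_def r_def by auto
    next
      case equal thus ?thesis using P1 P2 eq_L_trans unfolding Pm_def r_def by auto
    next
      case greater thus ?thesis using P1 P2 unfolding Pm_def r_def by auto
    qed
    ultimately show ?thesis unfolding Pm_def by blast
  qed
  have r3: "r \<le> mi m m''" "mi m m'' < length m" using mi_prop[OF Pr] unfolding Pm_def by auto
  have "f (m ! r) \<le> f (m ! mi m m'')" using chain_le[OF a(1) r3] f_le by blast
  moreover have "min (f (m ! r1)) (f (m' ! r2)) \<le> f (m ! r)"
    using P1 unfolding r_def Pm_def by (cases "r1 \<le> r2") (auto simp: min_def)
  ultimately have "min (f (m ! r1)) (f (m' ! r2)) \<le> f (m ! mi m m'')" by linarith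
  moreover have "D m m' = enat (f (m ! r1))" "D m' m'' = enat (f (m' ! r2))" "D m m'' = enat (f (m ! mi m m''))"
    using False D_neq r1_def r2_def by auto
  ultimately show ?thesis by simp
qed

lemma f_mult_ge: "f (omult x c) \<ge> f x"
  using fm[of x None c] by simp

lemma D_right:
  assumes a: "m \<in> rh_set" "m' \<in> rh_set" "m'' \<in> rh_set"
  shows "D m' m'' \<le> D (rh_mult m' m) (rh_mult m'' m)"
proof (cases "m' = m'' \<or> rh_mult m' m = rh_mult m'' m")
  case True
  thus ?thesis using D_le_H by auto
next
  case False
  define r where "r = mi m' m''"
  have P: "Pm m' m'' r" unfolding r_def using mi_prop(1)[OF Pm0] a by blast
  have Dr: "D m' m'' = enat (f (m' ! r))" using False D_neq r_def by auto
  show ?thesis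
  proof (cases "r = 0")
    case True
    have "m' ! 0 = None" using a unfolding rh_set_def by auto
    thus ?thesis using Dr True f0 by (simp add: zero_enat_def[symmetric])
  next
    case rpos: False
    define U where "U = take r m'"
    define x where "x = m' ! r"
    define y where "y = m'' ! r"
    define S' where "S' = drop (Suc r) m'"
    define T' where "T' = drop (Suc r) m''"
    have dm': "m' = U @ x # S'" and dm'': "m'' = U @ y # T'"
      using Pm_decomp[OF P] unfolding U_def x_def y_def S'_def T'_def by auto
    have lU: "length U = r" using P unfolding U_def Pm_def by simp
    have exy: "eq_L x y" using P unfolding x_def y_def Pm_def by simp
    obtain s where s: "m' = None # s" "None \<notin> set s" using rh_set_decomp a by blast
    obtain t where t: "m'' = None # t" "None \<notin> set t" using rh_set_decomp a by blast
    obtain p where p: "m = None # p" "None \<notin> set p" using rh_set_decomp a by blast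
    obtain u' where u': "U = None # u'" using lU rpos s(1) dm' by (cases U) auto
    have s': "s = u' @ x # S'" using s(1) dm' u' by simp
    have t': "t = u' @ y # T'" using t(1) dm'' u' by simp
    define c where "c = last (None # p)"
    define g where "g = (\<lambda>n. omult n c)"
    define W where "W = p @ map g u'"
    have e1: "rh_mult m' m = None # (lmp W (g x) @ lm (g x # map g S'))"
      using rh_mult_tl[OF s(2) p(2)] s(1) p(1) s' unfolding g_def[symmetric] c_def[symmetric] W_def
      by (simp add: lm_split[symmetric])
    have e2: "rh_mult m'' m = None # (lmp W (g y) @ lm (g y # map g T'))"
      using rh_mult_tl[OF t(2) p(2)] t(1) p(1) t' unfolding g_def[symmetric] c_def[symmetric] W_def
      by (simp add: lm_split[symmetric])
    have gxy: "eq_L (g x) (g y)" unfolding g_def using exy eq_L_right by blast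
    have lw: "lmp W (g y) = lmp W (g x)" using lmp_cong[OF gxy] by simp
    obtain a A' where aA: "lm (g x # map g S') = a # A'" by (cases "lm (g x # map g S')") auto
    obtain b B' where bB: "lm (g y # map g T') = b # B'" by (cases "lm (g y # map g T')") auto
    have "eq_L a (g x)" using hd_lm[of "g x # map g S'"] aA by simp
    moreover have "eq_L b (g y)" using hd_lm[of "g y # map g T'"] bB by simp
    ultimately have eab: "eq_L a b" using gxy eq_L_trans eq_L_sym by blast
    have "rh_meet (rh_mult m' m) (rh_mult m'' m) \<in> set (a # A')"
      by (rule meet_prefix[of _ "None # lmp W (g x)" a A' _ b B']) (use e1 e2 aA bB lw eab in auto)
    hence mem: "rh_meet (rh_mult m' m) (rh_mult m'' m) \<in> set (g x # map g S')"
      using set_lm aA by (metis subsetD)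
    have "f x \<le> f z" if zin: "z \<in> set (g x # map g S')" for z
    proof -
      consider "z = g x" | z0 where "z0 \<in> set S'" "z = g z0" using zin by auto
      thus ?thesis
      proof cases
        case 1 thus ?thesis unfolding g_def using f_mult_ge by simp
      next
        case 2
        then obtain k where k: "k < length S'" "z0 = S' ! k" by (metis in_set_conv_nth)
        have "m' ! (Suc r + k) = z0" "m' ! r = x" using dm' lU k by (auto simp: nth_append)
        moreover have "Suc r + k < length m'" using dm' lU k by simp
        ultimately have "le_L z0 x" using chain_le[OF a(2), of r "Suc r + k"] by simp
        then obtain d where "z0 = omult d x" unfolding le_L_def by blast
        hence "z = omult d (omult x c)" using 2 unfolding g_def by (simp add: omult_assoc)
        thus ?thesis using fm by simp
      qed
    qed
    hence "f x \<le> f (rh_meet (rh_mult m' m) (rh_mult m'' m))" using mem by blast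
    thus ?thesis using Dr False unfolding D_rh_def x_def by simp
  qed
qed

lemma strict_LF: "strict_length_function rh_set rh_mult D"
  unfolding strict_length_function_def length_function_def
proof (intro conjI ballI impI)
  fix m m' m'' assume a: "m \<in> rh_set" "m' \<in> rh_set" "m'' \<in> rh_set" "D m' m'' = D m m"
  show "m' = m''" using D_lt_H[of m' m''] a(4) by (metis D_refl order.strict_iff_not)
qed (auto simp: D_sym D_le_H D_right D_ultra)

end



lemma depth_eq:
  assumes "(par ^^ d) w = r" "\<forall>m<d. (par ^^ m) w \<noteq> r"
  shows "depth r par w = d"
  unfolding depth_def
proof (rule Least_equality)
  show "(par ^^ d) w = r" by fact
  fix y assume "(par ^^ y) w = r" thus "d \<le> y" using assms(2) not_less by blast
qed

lemma depth_props:
  assumes "rooted_tree V r par" "v \<in> V"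
  shows "(par ^^ depth r par v) v = r" "m < depth r par v \<Longrightarrow> (par ^^ m) v \<noteq> r"
proof -
  have ex: "\<exists>k. (par ^^ k) v = r" using assms unfolding rooted_tree_def by blast
  show "(par ^^ depth r par v) v = r" unfolding depth_def by (rule LeastI_ex[OF ex])
  show "m < depth r par v \<Longrightarrow> (par ^^ m) v \<noteq> r" unfolding depth_def by (rule not_less_Least)
qed

lemma funpow_comp_apply: "(f ^^ m) ((f ^^ k) v) = (f ^^ (m + k)) v"
  by (simp add: funpow_add)

lemma par_pow_in:
  assumes "rooted_tree V r par" "v \<in> V" "k \<le> depth r par v"
  shows "(par ^^ k) v \<in> V"
  using assms(3)
proof (induction k)
  case 0 thus ?case using assms by simp
next
  case (Suc k)
  have "(par ^^ k) v \<noteq> r" using depth_props(2)[OF assms(1,2)] Suc.prems by simp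
  moreover have "(par ^^ k) v \<in> V" using Suc by simp
  ultimately show ?case using assms(1) unfolding rooted_tree_def by simp
qed

lemma depth_par_pow:
  assumes "rooted_tree V r par" "v \<in> V" "k \<le> depth r par v"
  shows "depth r par ((par ^^ k) v) = depth r par v - k"
proof (rule depth_eq)
  show "(par ^^ (depth r par v - k)) ((par ^^ k) v) = r"
    using depth_props(1)[OF assms(1,2)] assms(3) by (simp add: funpow_comp_apply)
  show "\<forall>m<depth r par v - k. (par ^^ m) ((par ^^ k) v) \<noteq> r"
    using depth_props(2)[OF assms(1,2)] by (simp add: funpow_comp_apply)
qed

lemma anc_eq: "anc r par v = (\<lambda>k. (par ^^ k) v) ` {..depth r par v}"
  unfolding anc_def by auto

lemma finite_anc[simp]: "finite (anc r par v)"
  unfolding anc_eq by simp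

lemma card_anc:
  assumes "rooted_tree V r par" "v \<in> V"
  shows "card (anc r par v) = Suc (depth r par v)"
proof -
  have "inj_on (\<lambda>k. (par ^^ k) v) {..depth r par v}"
  proof (rule inj_onI)
    fix a b assume ab: "a \<in> {..depth r par v}" "b \<in> {..depth r par v}" "(par ^^ a) v = (par ^^ b) v"
    hence "depth r par v - a = depth r par v - b" using depth_par_pow[OF assms, of a] depth_par_pow[OF assms, of b] ab(1,2) by simp
    thus "a = b" using ab by auto
  qed
  thus ?thesis unfolding anc_eq by (simp add: card_image)
qed

lemma anc_self: "v \<in> anc r par v" unfolding anc_def by (auto intro: exI[of _ 0])

lemma anc_par_pow_sub:
  assumes "rooted_tree V r par" "v \<in> V" "k \<le> depth r par v"
  shows "anc r par ((par ^^ k) v) \<subseteq> anc r par v"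
proof
  fix x assume "x \<in> anc r par ((par ^^ k) v)"
  then obtain i where "i \<le> depth r par v - k" "x = (par ^^ (i + k)) v"
    unfolding anc_def depth_par_pow[OF assms] by (auto simp: funpow_comp_apply)
  thus "x \<in> anc r par v" unfolding anc_def using assms(3) by (intro CollectI exI[of _ "i+k"]) auto
qed

lemma tree_dist_par_pow:
  assumes "rooted_tree V r par" "v \<in> V" "k \<le> depth r par v"
  shows "tree_dist r par ((par ^^ k) v) v = k"
proof -
  have s: "anc r par ((par ^^ k) v) \<subseteq> anc r par v" by (rule anc_par_pow_sub[OF assms])
  have "card (anc r par v - anc r par ((par ^^ k) v)) = card (anc r par v) - card (anc r par ((par ^^ k) v))"
    using s by (simp add: card_Diff_subset)
  also have "\<dots> = k" using card_anc[OF assms(1,2)] card_anc[OF assms(1) par_pow_in[OF assms]]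
    depth_par_pow[OF assms] assms(3) by simp
  finally show ?thesis unfolding tree_dist_def using s by simp
qed

lemma tree_dist_anc:
  assumes "rooted_tree V r par" "u \<in> V" "v \<in> V" "depth r par u \<le> depth r par v"
    "tree_dist r par u v \<le> depth r par v - depth r par u"
  shows "u = (par ^^ (depth r par v - depth r par u)) v"
proof -
  have "card (anc r par v) - card (anc r par u) \<le> card (anc r par v - anc r par u)"
    by (rule diff_card_le_card_Diff) simp
  moreover have "card (anc r par v) - card (anc r par u) = depth r par v - depth r par u"
    using card_anc[OF assms(1,2)] card_anc[OF assms(1,3)] by simp
  moreover have "tree_dist r par u v = card (anc r par u - anc r par v) + card (anc r par v - anc r par u)"
    unfolding tree_dist_def ..
  ultimately have "card (anc r par u - anc r par v) = 0" using assms(5) by linarith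
  hence "anc r par u - anc r par v = {}" by (simp only: card_0_eq[OF finite_Diff[OF finite_anc]])
  hence "anc r par u \<subseteq> anc r par v" by blast
  hence "u \<in> anc r par v" using anc_self[of u r par] by blast
  then obtain k where k: "k \<le> depth r par v" "u = (par ^^ k) v" unfolding anc_def by blast
  hence "depth r par u = depth r par v - k" using depth_par_pow[OF assms(1,3)] by simp
  thus ?thesis using k by simp
qed

lemma card_img_diff: "finite A \<Longrightarrow> card (g ` A - g ` B) \<le> card (A - B)"
proof -
  assume "finite A"
  have "g ` A - g ` B \<subseteq> g ` (A - B)" by blast
  hence "card (g ` A - g ` B) \<le> card (g ` (A - B))" using \<open>finite A\<close> by (intro card_mono) auto
  also have "\<dots> \<le> card (A - B)" by (rule card_image_le) (use \<open>finite A\<close> in simp)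
  finally show ?thesis .
qed

lemma anc_map:
  assumes "depth r' par' (g v) = depth r par v" "\<forall>k\<le>depth r par v. (par' ^^ k) (g v) = g ((par ^^ k) v)"
  shows "anc r' par' (g v) = g ` anc r par v"
  unfolding anc_eq assms(1) using assms(2) by force

lemma tree_dist_map:
  assumes "anc r' par' (g u) = g ` anc r par u" "anc r' par' (g v) = g ` anc r par v"
  shows "tree_dist r' par' (g u) (g v) \<le> tree_dist r par u v"
  unfolding tree_dist_def assms using card_img_diff[of "anc r par u" g] card_img_diff[of "anc r par v" g]
  by (simp add: add_mono)

lemma Sup_enat_le: "Sup {enat i | i. enat i \<le> X} = X"
proof (rule antisym)
  show "Sup {enat i | i. enat i \<le> X} \<le> X" by (rule Sup_least) auto
  show "X \<le> Sup {enat i | i. enat i \<le> X}"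
  proof (cases X)
    case (enat n) thus ?thesis by (intro Sup_upper) auto
  next
    case infinity
    show ?thesis
    proof (rule ccontr)
      assume "\<not> X \<le> Sup {enat i | i. enat i \<le> X}"
      hence "Sup {enat i | i. enat i \<le> X} \<noteq> \<infinity>" using infinity by auto
      then obtain n where n: "Sup {enat i | i. enat i \<le> X} = enat n" by (cases "Sup {enat i | i. enat i \<le> X}") auto
      have "enat (Suc n) \<le> Sup {enat i | i. enat i \<le> X}" by (rule Sup_upper) (use infinity in auto)
      thus False using n by simp
    qed
  qed
qed

lemma Sup_enat_down:
  assumes "Q 0" "\<And>k j. Q k \<Longrightarrow> j \<le> k \<Longrightarrow> Q j" "enat i \<le> Sup {enat k | k. Q k}"
  shows "Q i"
proof (rule ccontr)
  assume nq: "\<not> Q i"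
  hence lt: "\<forall>k. Q k \<longrightarrow> k < i" using assms(2) not_less by blast
  hence "i > 0" using assms(1) by blast
  have "Sup {enat k | k. Q k} \<le> enat (i - 1)" by (rule Sup_least) (use lt in auto)
  hence "enat i \<le> enat (i - 1)" using assms(3) order.trans by blast
  thus False using \<open>i > 0\<close> by simp
qed

lemma enat_all_le: "(\<And>i. enat i \<le> H \<Longrightarrow> enat i \<le> X) \<Longrightarrow> H \<le> (X::enat)"
proof (cases H)
  case (enat n) thus "(\<And>i. enat i \<le> H \<Longrightarrow> enat i \<le> X) \<Longrightarrow> H \<le> X" by simp
next
  case infinity
  assume a: "\<And>i. enat i \<le> H \<Longrightarrow> enat i \<le> X"
  show "H \<le> X"
  proof (cases X)
    case (enat m) thus ?thesis using a[of "Suc m"] infinity by simp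
  qed simp
qed

lemma enat_all_inf: "(\<And>j. enat j \<le> X) \<Longrightarrow> X = \<infinity>"
proof (cases X)
  case (enat n)
  assume "\<And>j. enat j \<le> X"
  hence "enat (Suc n) \<le> X" .
  thus ?thesis using enat by simp
qed simp




locale etr = rhf f for f :: "'a::semigroup_mult option \<Rightarrow> nat" +
  fixes \<chi> :: "('v, 'a option list) etree"
  assumes ell: "elliptic_tree rh_set rh_mult rh_one \<chi>"
    and dch: "\<forall>\<sigma>\<in>rh_set. \<forall>\<tau>\<in>rh_set. D_chi \<chi> \<sigma> \<tau> = D \<sigma> \<tau>"
begin

abbreviation "V \<equiv> tverts \<chi>"
abbreviation "r \<equiv> troot \<chi>"
abbreviation "par \<equiv> tpar \<chi>"
abbreviation "act \<equiv> tact \<chi>"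
abbreviation "\<alpha> \<equiv> tray \<chi>"
abbreviation "dep \<equiv> depth r par"

definition xv where "xv i s = act (\<alpha> i) s"

lemma rt: "rooted_tree V r par"
  using ell unfolding elliptic_tree_def Let_def uniform_tree_def by blast
lemma mr: "is_max_ray V r par (hgt \<chi>) \<alpha>"
  using ell unfolding elliptic_tree_def Let_def by blast
lemma act_in: "v \<in> V \<Longrightarrow> s \<in> rh_set \<Longrightarrow> act v s \<in> V"
  using ell unfolding elliptic_tree_def Let_def by blast
lemma act_depth: "v \<in> V \<Longrightarrow> s \<in> rh_set \<Longrightarrow> dep (act v s) = dep v"
  using ell unfolding elliptic_tree_def Let_def by blast
lemma act_dist: "u \<in> V \<Longrightarrow> v \<in> V \<Longrightarrow> s \<in> rh_set \<Longrightarrow> tree_dist r par (act u s) (act v s) \<le> tree_dist r par u v"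
  using ell unfolding elliptic_tree_def Let_def by blast
lemma act_mult: "v \<in> V \<Longrightarrow> s \<in> rh_set \<Longrightarrow> t \<in> rh_set \<Longrightarrow> act v (rh_mult s t) = act (act v s) t"
  using ell unfolding elliptic_tree_def Let_def by blast
lemma act_one: "v \<in> V \<Longrightarrow> act v rh_one = v"
  using ell unfolding elliptic_tree_def Let_def by blast
lemma V_eq: "V = {xv i s | i s. enat i \<le> hgt \<chi> \<and> s \<in> rh_set}"
  using ell unfolding elliptic_tree_def Let_def xv_def by blast

lemma hgt_eq: "hgt \<chi> = H"
proof -
  have "D_chi \<chi> rh_one rh_one = hgt \<chi>" unfolding D_chi_def using Sup_enat_le[of "hgt \<chi>"] by simp
  thus ?thesis using dch by simp
qed

lemma ray_in: "enat i \<le> hgt \<chi> \<Longrightarrow> \<alpha> i \<in> V"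
  using mr unfolding is_max_ray_def is_ray_def by blast
lemma ray0: "\<alpha> 0 = r"
  using mr unfolding is_max_ray_def is_ray_def by blast
lemma ray_step: "enat (Suc i) \<le> hgt \<chi> \<Longrightarrow> \<alpha> (Suc i) \<noteq> r \<and> par (\<alpha> (Suc i)) = \<alpha> i"
  using mr unfolding is_max_ray_def is_ray_def by blast

lemma ray_pow: "enat i \<le> hgt \<chi> \<Longrightarrow> k \<le> i \<Longrightarrow> (par ^^ k) (\<alpha> i) = \<alpha> (i - k)"
proof (induction k)
  case (Suc k)
  have e: "i - k = Suc (i - Suc k)" using Suc.prems by simp
  have "enat (i - k) \<le> enat i" by simp
  hence "enat (i - k) \<le> hgt \<chi>" using Suc.prems(1) by (rule order_trans)
  thus ?case using Suc ray_step[of "i - Suc k"] e by simp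
qed simp

lemma ray_depth: "enat i \<le> hgt \<chi> \<Longrightarrow> dep (\<alpha> i) = i"
proof (rule depth_eq)
  assume a: "enat i \<le> hgt \<chi>"
  show "(par ^^ i) (\<alpha> i) = r" using ray_pow[OF a, of i] ray0 by simp
  show "\<forall>m<i. (par ^^ m) (\<alpha> i) \<noteq> r"
  proof (intro allI impI)
    fix m assume "m < i"
    hence e: "i - m = Suc (i - Suc m)" by simp
    have "enat (i - m) \<le> enat i" by simp
    hence "enat (i - m) \<le> hgt \<chi>" using a by (rule order_trans)
    thus "(par ^^ m) (\<alpha> i) \<noteq> r" using ray_pow[OF a, of m] \<open>m < i\<close> ray_step[of "i - Suc m"] e by simp
  qed
qed

lemma xv_in: "enat i \<le> hgt \<chi> \<Longrightarrow> s \<in> rh_set \<Longrightarrow> xv i s \<in> V"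
  unfolding xv_def using act_in ray_in by blast

lemma xv_depth: "enat i \<le> hgt \<chi> \<Longrightarrow> s \<in> rh_set \<Longrightarrow> dep (xv i s) = i"
  unfolding xv_def using act_depth ray_in ray_depth by simp

lemma xv_pow:
  assumes "enat i \<le> hgt \<chi>" "j \<le> i" "s \<in> rh_set"
  shows "(par ^^ (i - j)) (xv i s) = xv j s"
proof -
  have "enat j \<le> enat i" using assms(2) by simp
  hence j: "enat j \<le> hgt \<chi>" using assms(1) by (rule order_trans)
  have aj: "\<alpha> j = (par ^^ (i - j)) (\<alpha> i)" using ray_pow[OF assms(1), of "i - j"] assms(2) by simp
  have "tree_dist r par (\<alpha> j) (\<alpha> i) = i - j"
    unfolding aj by (rule tree_dist_par_pow[OF rt ray_in[OF assms(1)]]) (simp add: ray_depth[OF assms(1)])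
  hence "tree_dist r par (xv j s) (xv i s) \<le> i - j"
    unfolding xv_def using act_dist[OF ray_in[OF j] ray_in[OF assms(1)] assms(3)] by simp
  hence "xv j s = (par ^^ (dep (xv i s) - dep (xv j s))) (xv i s)"
    using tree_dist_anc[OF rt xv_in[OF j assms(3)] xv_in[OF assms(1,3)]]
      xv_depth[OF j assms(3)] xv_depth[OF assms(1,3)] assms(2) by simp
  thus ?thesis using xv_depth[OF j assms(3)] xv_depth[OF assms(1,3)] by simp
qed

lemma xv0: "s \<in> rh_set \<Longrightarrow> xv 0 s = r"
  using depth_props(1)[OF rt xv_in[of 0 s]] xv_depth[of 0 s] by (simp add: zero_enat_def[symmetric])

lemma xv_eq_iff:
  assumes "enat i \<le> hgt \<chi>" "s \<in> rh_set" "s' \<in> rh_set"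
  shows "xv i s = xv i s' \<longleftrightarrow> enat i \<le> D s s'"
proof -
  define Q where "Q k \<longleftrightarrow> enat k \<le> hgt \<chi> \<and> (\<forall>j\<le>k. xv j s = xv j s')" for k
  have Dc: "D s s' = Sup {enat k | k. Q k}"
    using dch assms(2,3) unfolding D_chi_def Q_def xv_def by auto
  show ?thesis
  proof
    assume e: "xv i s = xv i s'"
    have "Q i" unfolding Q_def
    proof (intro conjI allI impI)
      fix j assume "j \<le> i"
      hence "xv j s = (par ^^ (i - j)) (xv i s)" "xv j s' = (par ^^ (i - j)) (xv i s')"
        using xv_pow[OF assms(1) _ assms(2)] xv_pow[OF assms(1) _ assms(3)] by simp_all
      thus "xv j s = xv j s'" using e by simp
    qed fact
    thus "enat i \<le> D s s'" unfolding Dc by (intro Sup_upper) auto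
  next
    assume le: "enat i \<le> D s s'"
    have "Q i"
    proof (rule Sup_enat_down[of Q])
      show "Q 0" unfolding Q_def using xv0 assms by (simp add: zero_enat_def[symmetric])
      show "Q j" if h: "Q k" "j \<le> k" for k j
      proof -
        have "enat j \<le> enat k" using h(2) by simp
        hence "enat j \<le> hgt \<chi>" using h(1) unfolding Q_def using order_trans by blast
        thus ?thesis using h unfolding Q_def by auto
      qed
      show "enat i \<le> Sup {enat k | k. Q k}" using le unfolding Dc .
    qed
    thus "xv i s = xv i s'" unfolding Q_def by simp
  qed
qed

lemma V_cases: "v \<in> V \<Longrightarrow> \<exists>i s. enat i \<le> H \<and> s \<in> rh_set \<and> v = xv i s"
  using V_eq hgt_eq by auto

lemma act_xv: "enat i \<le> H \<Longrightarrow> s \<in> rh_set \<Longrightarrow> t \<in> rh_set \<Longrightarrow> act (xv i s) t = xv i (rh_mult s t)"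
  unfolding xv_def using act_mult ray_in hgt_eq by simp

lemma ray_xv: "enat i \<le> H \<Longrightarrow> \<alpha> i = xv i rh_one"
  unfolding xv_def using act_one ray_in hgt_eq by simp

end

context rhf
begin

lemma uniqueness:
  assumes "etr f \<chi>1" "etr f \<chi>2"
  shows "etree_iso rh_set \<chi>1 \<chi>2"
proof -
  interpret e1: etr f \<chi>1 by fact
  interpret e2: etr f \<chi>2 by fact
  define \<phi> where "\<phi> v = e2.xv (e1.dep v) (SOME s. s \<in> rh_set \<and> v = e1.xv (e1.dep v) s)" for v
  have \<phi>x: "\<phi> (e1.xv i s) = e2.xv i s" if "enat i \<le> H" "s \<in> rh_set" for i s
  proof -
    have d: "e1.dep (e1.xv i s) = i" using e1.xv_depth that e1.hgt_eq by simp
    define P where "P s' \<longleftrightarrow> s' \<in> rh_set \<and> e1.xv i s = e1.xv i s'" for s'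
    have "\<exists>s'. P s'" using that unfolding P_def by blast
    hence P: "P (SOME s'. P s')" by (rule someI_ex)
    define s' where "s' = (SOME s'. P s')"
    have "P s'" using P s'_def by simp
    hence s'12: "s' \<in> rh_set" "e1.xv i s = e1.xv i s'" unfolding P_def by auto
    have "\<phi> (e1.xv i s) = e2.xv i (SOME s'. s' \<in> rh_set \<and> e1.xv i s = e1.xv i s')"
      unfolding \<phi>_def d ..
    also have "\<dots> = e2.xv i s'" unfolding s'_def P_def ..
    finally have s': "s' \<in> rh_set" "e1.xv i s = e1.xv i s'" "\<phi> (e1.xv i s) = e2.xv i s'" using s'12 by auto
    have "enat i \<le> D s s'" using e1.xv_eq_iff[of i s s'] s' that e1.hgt_eq by simp
    hence "e2.xv i s = e2.xv i s'" using e2.xv_eq_iff[of i s s'] s' that e2.hgt_eq by simp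
    thus ?thesis using s' by simp
  qed
  have bij: "bij_betw \<phi> e1.V e2.V"
  proof (rule bij_betw_imageI)
    show "inj_on \<phi> e1.V"
    proof (rule inj_onI)
      fix u v assume uv: "u \<in> e1.V" "v \<in> e1.V" "\<phi> u = \<phi> v"
      obtain i s where u: "enat i \<le> H" "s \<in> rh_set" "u = e1.xv i s" using e1.V_cases uv(1) by blast
      obtain j t where v: "enat j \<le> H" "t \<in> rh_set" "v = e1.xv j t" using e1.V_cases uv(2) by blast
      have e: "e2.xv i s = e2.xv j t" using uv(3) u v \<phi>x by simp
      have "e2.dep (e2.xv i s) = i" "e2.dep (e2.xv j t) = j"
        using e2.xv_depth u(1,2) v(1,2) e2.hgt_eq by simp_all
      hence ij: "i = j" using e by simp
      hence "enat i \<le> D s t" using e e2.xv_eq_iff[of i s t] u v e2.hgt_eq by simp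
      hence "e1.xv i s = e1.xv i t" using e1.xv_eq_iff[of i s t] u v e1.hgt_eq by simp
      thus "u = v" using u v ij by simp
    qed
    show "\<phi> ` e1.V = e2.V"
    proof
      show "\<phi> ` e1.V \<subseteq> e2.V" using e1.V_cases \<phi>x e2.xv_in e2.hgt_eq by fastforce
      show "e2.V \<subseteq> \<phi> ` e1.V"
      proof
        fix w assume "w \<in> e2.V"
        then obtain i s where w: "enat i \<le> H" "s \<in> rh_set" "w = e2.xv i s" using e2.V_cases by blast
        have "e1.xv i s \<in> e1.V" using e1.xv_in w e1.hgt_eq by simp
        moreover have "w = \<phi> (e1.xv i s)" using \<phi>x w by simp
        ultimately show "w \<in> \<phi> ` e1.V" by blast
      qed
    qed
  qed
  have H0: "enat 0 \<le> H" by (simp add: zero_enat_def[symmetric])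
  have root: "\<phi> e1.r = e2.r"
    using \<phi>x[OF H0 rh_one_in] e1.xv0[OF rh_one_in] e2.xv0[OF rh_one_in] by simp
  have dep: "e2.dep (\<phi> v) = e1.dep v" if "v \<in> e1.V" for v
    using e1.V_cases[OF that] \<phi>x e1.xv_depth e2.xv_depth e1.hgt_eq e2.hgt_eq by auto
  have anc: "anc e2.r e2.par (\<phi> v) = \<phi> ` anc e1.r e1.par v" if vV: "v \<in> e1.V" for v
  proof (rule anc_map)
    show "e2.dep (\<phi> v) = e1.dep v" using dep vV .
    obtain i s where v: "enat i \<le> H" "s \<in> rh_set" "v = e1.xv i s" using e1.V_cases vV by blast
    show "\<forall>k\<le>e1.dep v. (e2.par ^^ k) (\<phi> v) = \<phi> ((e1.par ^^ k) v)"
    proof (intro allI impI)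
      fix k assume k: "k \<le> e1.dep v"
      hence k': "k \<le> i" using v e1.xv_depth e1.hgt_eq by simp
      have "enat (i - k) \<le> enat i" by simp
      hence ik: "enat (i - k) \<le> H" using v(1) by (rule order_trans)
      have "(e1.par ^^ k) v = e1.xv (i - k) s" using e1.xv_pow[of i "i - k" s] v k' e1.hgt_eq by simp
      moreover have "(e2.par ^^ k) (\<phi> v) = e2.xv (i - k) s"
        using e2.xv_pow[of i "i - k" s] v k' e2.hgt_eq \<phi>x by simp
      ultimately show "(e2.par ^^ k) (\<phi> v) = \<phi> ((e1.par ^^ k) v)" using \<phi>x[OF ik v(2)] by simp
    qed
  qed
  have dist: "tree_dist e2.r e2.par (\<phi> u) (\<phi> v) \<le> tree_dist e1.r e1.par u v" if "u \<in> e1.V" "v \<in> e1.V" for u v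
    by (rule tree_dist_map) (use anc that in auto)
  have hgt: "hgt \<chi>1 = hgt \<chi>2" using e1.hgt_eq e2.hgt_eq by simp
  have ray: "\<phi> (e1.\<alpha> i) = e2.\<alpha> i" if "enat i \<le> hgt \<chi>1" for i
    using that e1.ray_xv e2.ray_xv \<phi>x e1.hgt_eq by simp
  have actc: "\<phi> (e1.act v s) = e2.act (\<phi> v) s" if vs: "v \<in> e1.V" "s \<in> rh_set" for v s
  proof -
    obtain i t where v: "enat i \<le> H" "t \<in> rh_set" "v = e1.xv i t" using e1.V_cases vs(1) by blast
    have m: "rh_mult t s \<in> rh_set" using rh_mult_closed v(2) vs(2) by blast
    show ?thesis using e1.act_xv e2.act_xv v \<phi>x[OF v(1) m] \<phi>x[OF v(1,2)] vs by simp
  qed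
  show ?thesis unfolding etree_iso_def
    by (intro exI[of _ \<phi>] conjI ballI allI impI bij root dep dist hgt ray actc) auto
qed

end



lemma enat_le_mono: "j \<le> i \<Longrightarrow> enat i \<le> X \<Longrightarrow> enat j \<le> X"
  by (meson enat_ord_simps(1) order_trans)

context rhf
begin

definition cls :: "nat \<Rightarrow> 'a option list \<Rightarrow> 'a option list set" where
  "cls i \<sigma> = {\<tau> \<in> rh_set. enat i \<le> D \<sigma> \<tau>}"
definition rep :: "'a option list set \<Rightarrow> 'a option list" where "rep c = (SOME \<sigma>. \<sigma> \<in> c)"
definition Vc where "Vc = {(i, cls i \<sigma>) | i \<sigma>. enat i \<le> H \<and> \<sigma> \<in> rh_set}"
definition parc where "parc v = (fst v - 1, cls (fst v - 1) (rep (snd v)))"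
definition actc where "actc v s = (fst v, cls (fst v) (rh_mult (rep (snd v)) s))"
definition chi :: "(nat \<times> 'a option list set, 'a option list) etree" where
  "chi = \<lparr>troot = (0, rh_set), tverts = Vc, tpar = parc, hgt = H,
          tray = (\<lambda>i. (i, cls i rh_one)), tact = actc\<rparr>"

lemma cls0: "cls 0 \<sigma> = rh_set" unfolding cls_def by (auto simp: zero_enat_def[symmetric])

lemma cls_self: "\<sigma> \<in> rh_set \<Longrightarrow> enat i \<le> H \<Longrightarrow> \<sigma> \<in> cls i \<sigma>"
  unfolding cls_def by simp

lemma cls_eq:
  assumes "\<sigma> \<in> rh_set" "\<tau> \<in> rh_set" "enat i \<le> D \<sigma> \<tau>"
  shows "cls i \<sigma> = cls i \<tau>"
proof -
  have "\<rho> \<in> cls i \<tau>" if "\<rho> \<in> cls i \<sigma>" "\<sigma> \<in> rh_set" "\<tau> \<in> rh_set" "enat i \<le> D \<sigma> \<tau>" for \<rho> \<sigma> \<tau>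
  proof -
    have \<rho>: "\<rho> \<in> rh_set" "enat i \<le> D \<sigma> \<rho>" using that unfolding cls_def by auto
    have "min (D \<tau> \<sigma>) (D \<sigma> \<rho>) \<le> D \<tau> \<rho>" using D_ultra that \<rho> by blast
    moreover have "D \<tau> \<sigma> = D \<sigma> \<tau>" using D_sym that by simp
    ultimately have "enat i \<le> D \<tau> \<rho>" using \<rho> that by (simp add: min_def split: if_splits)
    thus ?thesis using \<rho> unfolding cls_def by simp
  qed
  moreover have "enat i \<le> D \<tau> \<sigma>" using assms D_sym by simp
  ultimately show ?thesis using assms by blast
qed

lemma cls_eq_iff:
  assumes "\<sigma> \<in> rh_set" "\<tau> \<in> rh_set" "enat i \<le> H"
  shows "cls i \<sigma> = cls i \<tau> \<longleftrightarrow> enat i \<le> D \<sigma> \<tau>"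
proof
  assume "cls i \<sigma> = cls i \<tau>"
  hence "\<tau> \<in> cls i \<sigma>" using cls_self assms by simp
  thus "enat i \<le> D \<sigma> \<tau>" unfolding cls_def by simp
qed (use cls_eq assms in blast)

lemma rep_cls:
  assumes "\<sigma> \<in> rh_set" "enat i \<le> H"
  shows "rep (cls i \<sigma>) \<in> rh_set" "enat i \<le> D \<sigma> (rep (cls i \<sigma>))"
proof -
  have "rep (cls i \<sigma>) \<in> cls i \<sigma>" unfolding rep_def by (rule someI[of _ \<sigma>]) (rule cls_self[OF assms])
  thus "rep (cls i \<sigma>) \<in> rh_set" "enat i \<le> D \<sigma> (rep (cls i \<sigma>))" unfolding cls_def by auto
qed

lemma cls_rep:
  assumes "\<sigma> \<in> rh_set" "enat i \<le> H" "j \<le> i"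
  shows "cls j (rep (cls i \<sigma>)) = cls j \<sigma>"
proof -
  have "enat i \<le> D (rep (cls i \<sigma>)) \<sigma>" using rep_cls[OF assms(1,2)] D_sym assms(1) by simp
  hence "enat j \<le> D (rep (cls i \<sigma>)) \<sigma>" using assms(3) enat_le_mono by blast
  thus ?thesis using cls_eq[OF rep_cls(1)[OF assms(1,2)] assms(1)] by blast
qed

lemma parc_pow:
  assumes "\<sigma> \<in> rh_set" "enat i \<le> H"
  shows "(parc ^^ k) (i, cls i \<sigma>) = (i - k, cls (i - k) \<sigma>)"
proof (induction k)
  case (Suc k)
  have "enat (i - k) \<le> H" using assms(2) enat_le_mono[of "i - k" i] by simp
  hence "parc (i - k, cls (i - k) \<sigma>) = (i - Suc k, cls (i - Suc k) \<sigma>)"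
    unfolding parc_def using cls_rep[OF assms(1), of "i - k" "i - k - 1"] by simp
  thus ?case using Suc by simp
qed simp

lemma Vc_cases: "v \<in> Vc \<Longrightarrow> \<exists>i \<sigma>. v = (i, cls i \<sigma>) \<and> enat i \<le> H \<and> \<sigma> \<in> rh_set"
  unfolding Vc_def by blast

lemma Vc_in: "enat i \<le> H \<Longrightarrow> \<sigma> \<in> rh_set \<Longrightarrow> (i, cls i \<sigma>) \<in> Vc"
  unfolding Vc_def by blast

lemma root_eq: "(0, cls 0 \<sigma>) = (0::nat, rh_set)" by (simp add: cls0)

lemma depth_c:
  assumes "\<sigma> \<in> rh_set" "enat i \<le> H"
  shows "depth (0, rh_set) parc (i, cls i \<sigma>) = i"
proof (rule depth_eq)
  show "(parc ^^ i) (i, cls i \<sigma>) = (0, rh_set)" using parc_pow[OF assms] by (simp add: cls0)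
  show "\<forall>m<i. (parc ^^ m) (i, cls i \<sigma>) \<noteq> (0, rh_set)" using parc_pow[OF assms] by simp
qed

lemma rooted_c: "rooted_tree Vc (0, rh_set) parc"
  unfolding rooted_tree_def
proof (intro conjI ballI impI)
  show "(0, rh_set) \<in> Vc" using Vc_in[of 0 rh_one] by (simp add: cls0 zero_enat_def[symmetric])
  fix v assume v: "v \<in> Vc"
  then obtain i \<sigma> where i: "v = (i, cls i \<sigma>)" "enat i \<le> H" "\<sigma> \<in> rh_set" using Vc_cases by blast
  have "parc v = (i - 1, cls (i - 1) \<sigma>)" using parc_pow[OF i(3,2), of 1] i by simp
  moreover have "enat (i - 1) \<le> H" using i enat_le_mono[of "i - 1" i] by simp
  ultimately show "parc v \<in> Vc" using Vc_in i by simp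
  show "\<exists>k. (parc ^^ k) v = (0, rh_set)" using parc_pow[OF i(3,2), of i] i by (auto simp: cls0)
qed

lemma Vc_fst: "v \<in> Vc \<Longrightarrow> enat (fst v) \<le> H" using Vc_cases by fastforce

lemma ray_fst:
  assumes "is_ray Vc (0, rh_set) parc l \<beta>"
  shows "enat j \<le> l \<Longrightarrow> fst (\<beta> j) = j \<and> \<beta> j \<in> Vc"
proof (induction j)
  case 0 thus ?case using assms rooted_c unfolding is_ray_def rooted_tree_def by auto
next
  case (Suc j)
  have "enat j \<le> l" using Suc.prems enat_le_mono[of j "Suc j"] by simp
  hence ij: "fst (\<beta> j) = j" using Suc.IH by simp
  have b: "\<beta> (Suc j) \<in> Vc" "\<beta> (Suc j) \<noteq> (0, rh_set)" "parc (\<beta> (Suc j)) = \<beta> j"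
    using assms Suc.prems unfolding is_ray_def by auto
  then obtain i \<tau> where i: "\<beta> (Suc j) = (i, cls i \<tau>)" "enat i \<le> H" "\<tau> \<in> rh_set" using Vc_cases by blast
  have "i \<noteq> 0" using b(2) i(1) cls0 by auto
  moreover have "fst (parc (\<beta> (Suc j))) = i - 1" using i(1) unfolding parc_def by simp
  hence "i - 1 = j" using b(3) ij by simp
  ultimately show ?case using i b by simp
qed

lemma max_ray_len:
  assumes "is_max_ray Vc (0, rh_set) parc l \<beta>"
  shows "l = H"
proof (cases l)
  case (enat n)
  have r: "is_ray Vc (0, rh_set) parc l \<beta>" using assms unfolding is_max_ray_def by simp
  have bn: "fst (\<beta> n) = n" "\<beta> n \<in> Vc" using ray_fst[OF r, of n] enat by auto
  then obtain \<sigma> where \<sigma>: "\<beta> n = (n, cls n \<sigma>)" "enat n \<le> H" "\<sigma> \<in> rh_set" using Vc_cases by fastforce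
  show ?thesis
  proof (rule ccontr)
    assume "l \<noteq> H"
    hence "enat n \<noteq> H" using enat by simp
    hence "enat n < H" using \<sigma>(2) order_le_neq_trans by blast
    hence s: "enat (Suc n) \<le> H" using Suc_ile_eq by blast
    have "parc (Suc n, cls (Suc n) \<sigma>) = (n, cls n \<sigma>)" using parc_pow[OF \<sigma>(3) s, of 1] by simp
    moreover have "(Suc n, cls (Suc n) \<sigma>) \<in> Vc" using Vc_in s \<sigma> by blast
    ultimately show False using assms enat \<sigma>(1) unfolding is_max_ray_def by force
  qed
next
  case infinity
  have r: "is_ray Vc (0, rh_set) parc l \<beta>" using assms unfolding is_max_ray_def by simp
  have "enat j \<le> H" for j using ray_fst[OF r, of j] infinity Vc_fst by fastforce
  hence "H = \<infinity>" by (rule enat_all_inf)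
  thus ?thesis using infinity by simp
qed

lemma actc_cls:
  assumes "\<sigma> \<in> rh_set" "enat i \<le> H" "s \<in> rh_set"
  shows "actc (i, cls i \<sigma>) s = (i, cls i (rh_mult \<sigma> s))"
proof -
  have "enat i \<le> D (rh_mult (rep (cls i \<sigma>)) s) (rh_mult \<sigma> s)"
  proof -
    have "enat i \<le> D (rep (cls i \<sigma>)) \<sigma>" using rep_cls[OF assms(1,2)] D_sym assms(1) by simp
    also have "\<dots> \<le> D (rh_mult (rep (cls i \<sigma>)) s) (rh_mult \<sigma> s)"
      using D_right[OF assms(3) rep_cls(1)[OF assms(1,2)] assms(1)] .
    finally show ?thesis .
  qed
  hence "cls i (rh_mult (rep (cls i \<sigma>)) s) = cls i (rh_mult \<sigma> s)"
    by (rule cls_eq[rotated 2]) (use rh_mult_closed rep_cls[OF assms(1,2)] assms in blast)+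
  thus ?thesis unfolding actc_def by simp
qed

lemma chi_props:
  "elliptic_tree rh_set rh_mult rh_one chi \<and> strongly_faithful rh_set chi \<and>
   (\<forall>\<sigma>\<in>rh_set. \<forall>\<tau>\<in>rh_set. D_chi chi \<sigma> \<tau> = D \<sigma> \<tau>)"
proof (intro conjI)
  have ray_act: "actc (i, cls i rh_one) s = (i, cls i s)" if "enat i \<le> H" "s \<in> rh_set" for i s
    using actc_cls[OF rh_one_in that] rh_left_one[OF that(2)] by simp
  show "elliptic_tree rh_set rh_mult rh_one chi"
    unfolding elliptic_tree_def Let_def chi_def etree.simps
  proof (intro conjI ballI)
    show "uniform_tree Vc (0, rh_set) parc"
      unfolding uniform_tree_def using rooted_c max_ray_len by blast
    show "is_max_ray Vc (0, rh_set) parc H (\<lambda>i. (i, cls i rh_one))"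
      unfolding is_max_ray_def is_ray_def
    proof (intro conjI allI impI)
      show "(0, cls 0 rh_one) = (0::nat, rh_set)" by (simp add: cls0)
      fix i
      show "enat i \<le> H \<Longrightarrow> (i, cls i rh_one) \<in> Vc" using Vc_in by simp
      show "enat (Suc i) \<le> H \<Longrightarrow> (Suc i, cls (Suc i) rh_one) \<noteq> (0, rh_set)" by simp
      show "enat (Suc i) \<le> H \<Longrightarrow> parc (Suc i, cls (Suc i) rh_one) = (i, cls i rh_one)"
        using parc_pow[OF rh_one_in, of "Suc i" 1] by simp
    next
      fix n assume n: "H = enat n"
      show "\<not> (\<exists>w\<in>Vc. w \<noteq> (0, rh_set) \<and> parc w = (n, cls n rh_one))"
      proof
        assume "\<exists>w\<in>Vc. w \<noteq> (0, rh_set) \<and> parc w = (n, cls n rh_one)"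
        then obtain w where w: "w \<in> Vc" "w \<noteq> (0, rh_set)" "parc w = (n, cls n rh_one)" by blast
        then obtain i \<tau> where i: "w = (i, cls i \<tau>)" "enat i \<le> H" "\<tau> \<in> rh_set" using Vc_cases by blast
        have "i \<noteq> 0" using w(2) i(1) cls0 by auto
        moreover have "fst (parc w) = i - 1" using i(1) unfolding parc_def by simp
        hence "i - 1 = n" using w(3) by simp
        ultimately show False using i(2) n by simp
      qed
    qed
    fix v and s :: "'a option list" assume v: "v \<in> Vc" and s: "s \<in> rh_set"
    obtain i \<sigma> where i: "v = (i, cls i \<sigma>)" "enat i \<le> H" "\<sigma> \<in> rh_set" using Vc_cases v by blast
    have av: "actc v s = (i, cls i (rh_mult \<sigma> s))" using actc_cls i s by simp
    have ms: "rh_mult \<sigma> s \<in> rh_set" using rh_mult_closed i s by blast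
    show "actc v s \<in> Vc" using av Vc_in i ms by simp
    show "depth (0, rh_set) parc (actc v s) = depth (0, rh_set) parc v"
      using av depth_c i ms by simp
    {
      fix u assume u: "u \<in> Vc"
      have ancl: "anc (0, rh_set) parc (actc w s) = (\<lambda>w. actc w s) ` anc (0, rh_set) parc w" if w: "w \<in> Vc" for w
      proof (rule anc_map)
        obtain j \<tau> where j: "w = (j, cls j \<tau>)" "enat j \<le> H" "\<tau> \<in> rh_set" using Vc_cases w by blast
        have aw: "actc w s = (j, cls j (rh_mult \<tau> s))" using actc_cls j s by simp
        have mt: "rh_mult \<tau> s \<in> rh_set" using rh_mult_closed j s by blast
        show "depth (0, rh_set) parc (actc w s) = depth (0, rh_set) parc w" using aw depth_c j mt by simp
        show "\<forall>k\<le>depth (0, rh_set) parc w. (parc ^^ k) (actc w s) = actc ((parc ^^ k) w) s"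
        proof (intro allI impI)
          fix k
          have jk: "enat (j - k) \<le> H" using j enat_le_mono[of "j - k" j] by simp
          show "(parc ^^ k) (actc w s) = actc ((parc ^^ k) w) s"
            using aw parc_pow[OF mt j(2)] parc_pow[OF j(3,2)] j actc_cls[OF j(3) jk s] by simp
        qed
      qed
      show "tree_dist (0, rh_set) parc (actc u s) (actc v s) \<le> tree_dist (0, rh_set) parc u v"
        by (rule tree_dist_map) (use ancl u v in auto)
    }
    fix t :: "'a option list" assume t: "t \<in> rh_set"
    have mst: "rh_mult s t \<in> rh_set" using rh_mult_closed s t by blast
    show "actc v (rh_mult s t) = actc (actc v s) t"
      using av actc_cls[OF ms i(2) t] actc_cls[OF i(3,2) mst] i rh_assoc[OF i(3) s t] by simp
  next
    fix v assume v: "v \<in> Vc"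
    obtain i \<sigma> where i: "v = (i, cls i \<sigma>)" "enat i \<le> H" "\<sigma> \<in> rh_set" using Vc_cases v by blast
    show "actc v rh_one = v" using actc_cls[OF i(3,2) rh_one_in] rh_right_one[OF i(3)] i by simp
  next
    show "Vc = {actc (i, cls i rh_one) s |i s. enat i \<le> H \<and> s \<in> rh_set}"
      unfolding Vc_def using ray_act by force
  qed
  show "strongly_faithful rh_set chi"
    unfolding strongly_faithful_def chi_def etree.simps
  proof (intro ballI impI)
    fix s s' :: "'a option list" assume s: "s \<in> rh_set" "s' \<in> rh_set"
      and h: "\<forall>i. enat i \<le> H \<longrightarrow> actc (i, cls i rh_one) s = actc (i, cls i rh_one) s'"
    have "H \<le> D s s'"
    proof (rule enat_all_le)
      fix i assume i: "enat i \<le> H"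
      hence "cls i s = cls i s'" using h ray_act s by simp
      thus "enat i \<le> D s s'" using cls_eq_iff s i by blast
    qed
    thus "s = s'" using D_lt_H[of s s'] by (auto simp: not_le[symmetric])
  qed
  show "\<forall>\<sigma>\<in>rh_set. \<forall>\<tau>\<in>rh_set. D_chi chi \<sigma> \<tau> = D \<sigma> \<tau>"
  proof (intro ballI)
    fix \<sigma> \<tau> :: "'a option list" assume st: "\<sigma> \<in> rh_set" "\<tau> \<in> rh_set"
    have "{enat i |i. enat i \<le> H \<and> (\<forall>j\<le>i. actc (j, cls j rh_one) \<sigma> = actc (j, cls j rh_one) \<tau>)}
        = {enat i |i. enat i \<le> D \<sigma> \<tau>}"
    proof -
      have "(enat i \<le> H \<and> (\<forall>j\<le>i. actc (j, cls j rh_one) \<sigma> = actc (j, cls j rh_one) \<tau>))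
          \<longleftrightarrow> enat i \<le> D \<sigma> \<tau>" for i
      proof
        assume a: "enat i \<le> H \<and> (\<forall>j\<le>i. actc (j, cls j rh_one) \<sigma> = actc (j, cls j rh_one) \<tau>)"
        hence "cls i \<sigma> = cls i \<tau>" using ray_act st by auto
        thus "enat i \<le> D \<sigma> \<tau>" using cls_eq_iff st a by blast
      next
        assume a: "enat i \<le> D \<sigma> \<tau>"
        hence iH: "enat i \<le> H" using D_le_H order_trans by blast
        have "actc (j, cls j rh_one) \<sigma> = actc (j, cls j rh_one) \<tau>" if "j \<le> i" for j
        proof -
          have "enat j \<le> D \<sigma> \<tau>" using a that enat_le_mono by blast
          moreover have jH: "enat j \<le> H" using iH that enat_le_mono by blast
          ultimately show ?thesis using ray_act[OF jH] st cls_eq_iff[OF st jH] by simp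
        qed
        thus "enat i \<le> H \<and> (\<forall>j\<le>i. actc (j, cls j rh_one) \<sigma> = actc (j, cls j rh_one) \<tau>)" using iH by blast
      qed
      thus ?thesis by simp
    qed
    thus "D_chi chi \<sigma> \<tau> = D \<sigma> \<tau>" unfolding D_chi_def chi_def etree.simps using Sup_enat_le by simp
  qed
qed

end


theorem theorem6p1:
  fixes f :: "'a::semigroup_mult option \<Rightarrow> nat"
  assumes "f None = 0"
    and "\<And>m m' m''. f (omult m' (omult m m'')) \<ge> f m"
  shows "strict_length_function rh_set rh_mult (D_rh f)
     \<and> (\<exists>\<chi> :: (nat \<times> 'a option list set, 'a option list) etree.
          elliptic_tree rh_set rh_mult rh_one \<chi> \<and> strongly_faithful rh_set \<chi> \<and>
          (\<forall>\<sigma>\<in>rh_set. \<forall>\<tau>\<in>rh_set. D_chi \<chi> \<sigma> \<tau> = D_rh f \<sigma> \<tau>))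
     \<and> (\<forall>(\<chi>1 :: ('v, 'a option list) etree) (\<chi>2 :: ('w, 'a option list) etree).
          elliptic_tree rh_set rh_mult rh_one \<chi>1 \<and> strongly_faithful rh_set \<chi>1 \<and>
          (\<forall>\<sigma>\<in>rh_set. \<forall>\<tau>\<in>rh_set. D_chi \<chi>1 \<sigma> \<tau> = D_rh f \<sigma> \<tau>) \<and>
          elliptic_tree rh_set rh_mult rh_one \<chi>2 \<and> strongly_faithful rh_set \<chi>2 \<and>
          (\<forall>\<sigma>\<in>rh_set. \<forall>\<tau>\<in>rh_set. D_chi \<chi>2 \<sigma> \<tau> = D_rh f \<sigma> \<tau>)
          \<longrightarrow> etree_iso rh_set \<chi>1 \<chi>2)"
proof -
  interpret rhf f using assms by unfold_locales auto
  have U: "etree_iso rh_set \<chi>1 \<chi>2"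
    if h: "elliptic_tree rh_set rh_mult rh_one \<chi>1"
          "\<forall>\<sigma>\<in>rh_set. \<forall>\<tau>\<in>rh_set. D_chi \<chi>1 \<sigma> \<tau> = D_rh f \<sigma> \<tau>"
          "elliptic_tree rh_set rh_mult rh_one \<chi>2"
          "\<forall>\<sigma>\<in>rh_set. \<forall>\<tau>\<in>rh_set. D_chi \<chi>2 \<sigma> \<tau> = D_rh f \<sigma> \<tau>"
    for \<chi>1 :: "('v, 'a option list) etree" and \<chi>2 :: "('w, 'a option list) etree"
  proof (rule uniqueness)
    show "etr f \<chi>1" by unfold_locales (use h in auto)
    show "etr f \<chi>2" by unfold_locales (use h in auto)
  qed
  show ?thesis
  proof (intro conjI)
    show "strict_length_function rh_set rh_mult (D_rh f)" by (rule strict_LF)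
    show "\<exists>\<chi> :: (nat \<times> 'a option list set, 'a option list) etree.
          elliptic_tree rh_set rh_mult rh_one \<chi> \<and> strongly_faithful rh_set \<chi> \<and>
          (\<forall>\<sigma>\<in>rh_set. \<forall>\<tau>\<in>rh_set. D_chi \<chi> \<sigma> \<tau> = D_rh f \<sigma> \<tau>)"
      using chi_props by blast
  qed (use U in blast)
qed

end
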